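(* Let $f\colon\mathbb{R}^n\to\mathbb{R}^d$ be a Borel map and let $\mu$ be a Borel probability measure on $\mathbb{R}^n$. Then $$\dim_P\mu_f=\sup\Big\{\gamma:\ \liminf_{r\to0+}r^{-\gamma}\int_{\mathbb{R}^n}I_d^f(x,y,r)\,d\mu(y)=0\text{ for }\mu\text{-a.e. }x\in\mathbb{R}^n\Big\},$$ $$\dim_P\mu_{f^*}=\sup\Big\{\gamma:\ \liminf_{r\to0+}r^{-\gamma}\int_{D(x,r)}I_d^f(x,y,r)\,d\mu(y)=0\text{ for }\mu\text{-a.e. }x\in\mathbb{R}^n\Big\}.$$
   Context: $\mu_h=\mu\circ h^{-1}$; $f^*(t)=(t,f(t))\in\mathbb{R}^{n+d}$. For a Borel probability measure $\nu$, $\dim_P\nu=\inf\{\dim_P E: E\text{ Borel},\ \nu(E)>0\}$ with $\dim_P E$ packing dimension. $D(x,r)$ is the closed ball in the maximum norm on $\mathbb{R}^n$. $I_d(z)=\prod_{i=1}^d\min\{1,|z_i|^{-1}\}$ for $z\in\mathbb{R}^d$ (with $\min\{1,0^{-1}\}=1$), and $I_d^f(x,y,r)=I_d\big((f(y)-f(x))/r\big)$. *)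

theory Defs
  imports "HOL-Analysis.Analysis" "HOL-Probability.Probability"
begin

definition packing_pre_delta :: "real \<Rightarrow> real \<Rightarrow> 'a::metric_space set \<Rightarrow> ennreal" where
  "packing_pre_delta s \<delta> E =
     (SUP P \<in> {P. countable P \<and> P \<subseteq> E \<times> {0<..\<delta>} \<and>
                 (\<forall>p\<in>P. \<forall>q\<in>P. p \<noteq> q \<longrightarrow>
                    cball (fst p) (snd p) \<inter> cball (fst q) (snd q) = {})}.
        (\<integral>\<^sup>+ p. ennreal ((2 * snd p) powr s) \<partial>count_space P))"

definition packing_premeasure :: "real \<Rightarrow> 'a::metric_space set \<Rightarrow> ennreal" where
  "packing_premeasure s E = (INF \<delta> \<in> {0<..}. packing_pre_delta s \<delta> E)"

definition packing_measure :: "real \<Rightarrow> 'a::metric_space set \<Rightarrow> ennreal" where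
  "packing_measure s E =
     (INF A \<in> {A :: nat \<Rightarrow> 'a set. E \<subseteq> (\<Union>i. A i)}. (\<Sum>i. packing_premeasure s (A i)))"

definition packing_dim :: "'a::metric_space set \<Rightarrow> ereal" where
  "packing_dim E = Inf {ereal s | s. 0 \<le> s \<and> packing_measure s E = 0}"

definition packing_dim_measure :: "'a::metric_space measure \<Rightarrow> ereal" where
  "packing_dim_measure \<nu> = (INF E \<in> {E \<in> sets \<nu>. emeasure \<nu> E > 0}. packing_dim E)"

definition Dmax :: "real^'n \<Rightarrow> real \<Rightarrow> (real^'n) set" where
  "Dmax x r = {y. \<forall>i. \<bar>y $ i - x $ i\<bar> \<le> r}"

definition I_d :: "real^'d \<Rightarrow> real" where
  "I_d z = (\<Prod>i\<in>UNIV. if z $ i = 0 then 1 else min 1 (1 / \<bar>z $ i\<bar>))"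

definition I_d_f :: "(real^'n \<Rightarrow> real^'d) \<Rightarrow> real^'n \<Rightarrow> real^'n \<Rightarrow> real \<Rightarrow> real" where
  "I_d_f f x y r = I_d ((1 / r) *\<^sub>R (f y - f x))"

definition graph_map :: "(real^'n \<Rightarrow> real^'d) \<Rightarrow> real^'n \<Rightarrow> (real^'n) \<times> (real^'d)" where
  "graph_map f t = (t, f t)"

end

theory Submission
  imports Defs
begin

definition Kr :: "real \<Rightarrow> 'a::euclidean_space \<Rightarrow> real" where
  "Kr r a = (\<Prod>b\<in>Basis. r / max r \<bar>a \<bullet> b\<bar>)"

lemma Kr_nonneg: "0 < r \<Longrightarrow> 0 \<le> Kr r a"
  unfolding Kr_def by (intro prod_nonneg) auto

lemma Kr_le1: "0 < r \<Longrightarrow> Kr r a \<le> 1"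
  unfolding Kr_def by (intro prod_le_1) auto

lemma Kr_one: "0 < r \<Longrightarrow> (\<And>b. b \<in> Basis \<Longrightarrow> \<bar>a \<bullet> b\<bar> \<le> r) \<Longrightarrow> Kr r a = 1"
  unfolding Kr_def by (intro prod.neutral) (force simp: max_def)

lemma Kr_one_norm: "0 < r \<Longrightarrow> norm a \<le> r \<Longrightarrow> Kr r a = 1"
  by (rule Kr_one) (auto intro: order_trans[OF Basis_le_norm])

lemma Kr_mono: assumes "0 < r" "r \<le> r'" shows "Kr r a \<le> Kr r' a"
  unfolding Kr_def
proof (intro prod_mono conjI)
  fix b :: 'a
  show "0 \<le> r / max r \<bar>a \<bullet> b\<bar>" using assms by auto
  show "r / max r \<bar>a \<bullet> b\<bar> \<le> r' / max r' \<bar>a \<bullet> b\<bar>"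
    using assms by (auto simp: max_def field_simps)
qed

lemma continuous_Kr: "0 < r \<Longrightarrow> continuous_on UNIV (Kr r :: 'a::euclidean_space \<Rightarrow> real)"
  unfolding Kr_def by (intro continuous_intros) auto

lemma borel_Kr[measurable]: "0 < r \<Longrightarrow> Kr r \<in> borel_measurable (borel :: 'a::euclidean_space measure)"
  using continuous_Kr by (intro borel_measurable_continuous_onI) auto

lemma I_d_Kr:
  fixes z :: "real^'d"
  assumes r: "0 < r"
  shows "I_d ((1 / r) *\<^sub>R z) = Kr r z"
proof -
  have B: "(Basis :: (real^'d) set) = range (\<lambda>i. axis i 1)"
    by (auto simp: Basis_vec_def)
  have inj: "inj (\<lambda>i::'d. axis i (1::real))"
    by (auto simp: inj_def axis_eq_axis)
  have "Kr r z = (\<Prod>i\<in>UNIV. r / max r \<bar>z $ i\<bar>)"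
    unfolding Kr_def B by (subst prod.reindex[OF inj]) (simp add: inner_axis)
  also have "\<dots> = I_d ((1 / r) *\<^sub>R z)"
    unfolding I_d_def
  proof (intro prod.cong refl)
    fix i
    show "r / max r \<bar>z $ i\<bar> = (if ((1 / r) *\<^sub>R z) $ i = 0 then 1 else min 1 (1 / \<bar>((1 / r) *\<^sub>R z) $ i\<bar>))"
      using r by (auto simp: max_def min_def abs_mult field_simps)
  qed
  finally show ?thesis ..
qed

lemma I_d_f_Kr: "0 < r \<Longrightarrow> I_d_f f x y r = Kr r (f y - f x)"
  unfolding I_d_f_def by (rule I_d_Kr)

lemma Kr_Pair: "Kr r (a, b) = Kr r a * Kr r b"
proof -
  have "Kr r (a, b) = (\<Prod>u\<in>(\<lambda>u. (u, 0)) ` Basis \<union> (\<lambda>v. (0, v)) ` Basis. r / max r \<bar>(a, b) \<bullet> u\<bar>)"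
    unfolding Kr_def Basis_prod_def ..
  also have "\<dots> = (\<Prod>u\<in>(\<lambda>u. (u, 0)) ` Basis. r / max r \<bar>(a, b) \<bullet> u\<bar>) *
                  (\<Prod>u\<in>(\<lambda>v. (0, v)) ` Basis. r / max r \<bar>(a, b) \<bullet> u\<bar>)"
    by (subst prod.union_disjoint) auto
  also have "\<dots> = Kr r a * Kr r b"
    unfolding Kr_def by (subst prod.reindex, simp add: inj_on_def)+ simp
  finally show ?thesis .
qed

lemma Kr_vec_one: "0 < r \<Longrightarrow> (\<And>i. \<bar>(a::real^'n) $ i\<bar> \<le> r) \<Longrightarrow> Kr r a = 1"
  by (rule Kr_one) (auto simp: Basis_vec_def inner_axis)

lemma nn_integral_count_space_ge:
  assumes "j \<in> I" shows "f j \<le> (\<integral>\<^sup>+ i. f i \<partial>count_space I)"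
proof -
  have "(\<integral>\<^sup>+ i. f i * indicator {j} i \<partial>count_space I) = f j"
    using assms by (subst nn_integral_count_space'[where A="{j}"]) auto
  moreover have "(\<integral>\<^sup>+ i. f i * indicator {j} i \<partial>count_space I) \<le> (\<integral>\<^sup>+ i. f i \<partial>count_space I)"
    by (intro nn_integral_mono) (auto split: split_indicator)
  ultimately show ?thesis by simp
qed

lemma emeasure_UN_countable_le:
  assumes I: "countable I" and X: "\<And>i. i \<in> I \<Longrightarrow> X i \<in> sets M"
  shows "emeasure M (\<Union>(X ` I)) \<le> (\<integral>\<^sup>+ i. emeasure M (X i) \<partial>count_space I)"
proof -
  have U: "\<Union>(X ` I) \<in> sets M" using I X by (intro sets.countable_UN') auto
  have "emeasure M (\<Union>(X ` I)) = (\<integral>\<^sup>+ x. indicator (\<Union>(X ` I)) x \<partial>M)"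
    using U by simp
  also have "\<dots> \<le> (\<integral>\<^sup>+ x. (\<integral>\<^sup>+ i. indicator (X i) x \<partial>count_space I) \<partial>M)"
  proof (intro nn_integral_mono)
    fix x
    show "indicator (\<Union>(X ` I)) x \<le> (\<integral>\<^sup>+ i. indicator (X i) x \<partial>count_space I)"
    proof (cases "x \<in> \<Union>(X ` I)")
      case True
      then obtain j where "j \<in> I" "x \<in> X j" by auto
      moreover have "indicator (\<Union>(X ` I)) x = (1::ennreal)" using True by (simp add: indicator_def)
      ultimately show ?thesis
        using nn_integral_count_space_ge[of j I "\<lambda>i. indicator (X i) x :: ennreal"] by simp
    qed simp
  qed
  also have "\<dots> = (\<integral>\<^sup>+ i. (\<integral>\<^sup>+ x. indicator (X i) x \<partial>M) \<partial>count_space I)"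
    using X by (intro nn_integral_count_space_nn_integral I) auto
  also have "\<dots> = (\<integral>\<^sup>+ i. emeasure M (X i) \<partial>count_space I)"
    using X by (intro nn_integral_cong) auto
  finally show ?thesis .
qed

lemma pre_delta_mono: "A \<subseteq> B \<Longrightarrow> packing_pre_delta s \<delta> A \<le> packing_pre_delta s \<delta> B"
  unfolding packing_pre_delta_def by (rule SUP_subset_mono) auto

lemma vitali_bound:
  fixes \<nu> :: "'a::euclidean_space measure"
  assumes fin: "finite_measure \<nu>" and sets_nu: "sets \<nu> = sets borel"
    and s: "0 \<le> s" and \<delta>: "0 < \<delta>"
    and A: "\<And>w c \<epsilon>. w \<in> A \<Longrightarrow> 0 < c \<Longrightarrow> 0 < \<epsilon> \<Longrightarrow> \<exists>r. 0 < r \<and> r < \<epsilon> \<and> measure \<nu> (cball w r) < c * r powr s"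
  shows "\<exists>U\<in>sets borel. A \<subseteq> U \<and> emeasure \<nu> U \<le> packing_pre_delta s \<delta> A"
proof -
  define K where "K = {p. fst p \<in> A \<and> 0 < snd p \<and> snd p \<le> \<delta> \<and>
      measure \<nu> (cball (fst p) (5 * snd p)) < snd p powr s}"
  have cov: "A \<subseteq> (\<Union>p\<in>K. cball (fst p) (snd p))"
  proof
    fix w assume w: "w \<in> A"
    have c: "0 < 5 powr (-s)" by simp
    from A[OF w c, of "5 * \<delta>"] \<delta> obtain r where
      r: "0 < r" "r < 5 * \<delta>" "measure \<nu> (cball w r) < 5 powr (-s) * r powr s" by auto
    have "5 powr (-s) * r powr s = (r / 5) powr s"
      by (simp add: powr_divide powr_minus_divide)
    then have "(w, r / 5) \<in> K" using r w unfolding K_def by auto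
    then show "w \<in> (\<Union>p\<in>K. cball (fst p) (snd p))"
      using r by (intro UN_I[of "(w, r/5)"]) auto
  qed
  obtain C where C: "countable C" "C \<subseteq> K"
    "pairwise (\<lambda>i j. disjnt (cball (fst i) (snd i)) (cball (fst j) (snd j))) C"
    "A \<subseteq> (\<Union>i\<in>C. cball (fst i) (5 * snd i))"
    using Vitali_covering_lemma_cballs[OF cov, of \<delta>] unfolding K_def by auto
  define U where "U = (\<Union>i\<in>C. cball (fst i) (5 * snd i))"
  have Ub: "U \<in> sets borel"
    unfolding U_def using C(1) by (intro sets.countable_UN') auto
  interpret finite_measure \<nu> by fact
  have "emeasure \<nu> U \<le> (\<integral>\<^sup>+ i. emeasure \<nu> (cball (fst i) (5 * snd i)) \<partial>count_space C)"
    unfolding U_def using C(1) sets_nu by (intro emeasure_UN_countable_le) auto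
  also have "\<dots> \<le> (\<integral>\<^sup>+ i. ennreal ((2 * snd i) powr s) \<partial>count_space C)"
  proof (intro nn_integral_mono)
    fix i assume "i \<in> space (count_space C)"
    then have i: "i \<in> K" using C by auto
    have "emeasure \<nu> (cball (fst i) (5 * snd i)) = ennreal (measure \<nu> (cball (fst i) (5 * snd i)))"
      by (simp add: emeasure_eq_measure)
    also have "\<dots> \<le> ennreal (snd i powr s)"
      using i unfolding K_def by (intro ennreal_leI) auto
    also have "\<dots> \<le> ennreal ((2 * snd i) powr s)"
      using i s unfolding K_def by (intro ennreal_leI powr_mono2) auto
    finally show "emeasure \<nu> (cball (fst i) (5 * snd i)) \<le> ennreal ((2 * snd i) powr s)" .
  qed
  also have "\<dots> \<le> packing_pre_delta s \<delta> A"
    unfolding packing_pre_delta_def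
  proof (rule SUP_upper)
    show "C \<in> {P. countable P \<and> P \<subseteq> A \<times> {0<..\<delta>} \<and>
          (\<forall>p\<in>P. \<forall>q\<in>P. p \<noteq> q \<longrightarrow> cball (fst p) (snd p) \<inter> cball (fst q) (snd q) = {})}"
      using C unfolding K_def pairwise_def disjnt_def by (auto simp: mem_Times_iff subset_iff)
  qed
  finally show ?thesis using Ub C(4) unfolding U_def by auto
qed


lemma premeasure_lessD:
  "packing_premeasure s A < X \<Longrightarrow> \<exists>\<delta>>0. packing_pre_delta s \<delta> A < X"
  by (auto simp: packing_premeasure_def INF_less_iff)

lemma B_main:
  fixes h :: "'m \<Rightarrow> 'a::euclidean_space"
  assumes M: "prob_space M" and h: "h \<in> M \<rightarrow>\<^sub>M borel"
    and Qlow: "\<And>x r. x \<in> space M \<Longrightarrow> 0 < r \<Longrightarrow> measure (distr M borel h) (cball (h x) r) \<le> Q x r"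
    and AE: "AE x in M. Liminf (at_right 0) (\<lambda>r. ereal (r powr (-\<gamma>) * Q x r)) = 0"
    and E: "E \<in> sets borel" "0 < emeasure (distr M borel h) E"
  shows "ereal \<gamma> \<le> packing_dim E"
proof (rule ccontr)
  define \<nu> where "\<nu> = distr M borel h"
  interpret M: prob_space M by fact
  have "prob_space \<nu>" unfolding \<nu>_def by (rule M.prob_space_distr[OF h])
  then have fin: "finite_measure \<nu>" by (simp add: prob_space_def)
  have sets_nu: "sets \<nu> = sets borel" unfolding \<nu>_def by simp
  assume "\<not> ereal \<gamma> \<le> packing_dim E"
  then have "packing_dim E < ereal \<gamma>" by simp
  then obtain s where s: "0 \<le> s" "packing_measure s E = 0" "s < \<gamma>"
    unfolding packing_dim_def by (auto simp: Inf_less_iff)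
  define W where "W = {w. \<forall>c>0. \<forall>\<epsilon>>0. \<exists>r. 0 < r \<and> r < \<epsilon> \<and> measure \<nu> (cball w r) < c * r powr s}"
  from AE obtain N where N: "{x\<in>space M. \<not> Liminf (at_right 0) (\<lambda>r. ereal (r powr (-\<gamma>) * Q x r)) = 0} \<subseteq> N"
    "emeasure M N = 0" "N \<in> sets M"
    by (auto elim: AE_E)
  have W: "h x \<in> W" if x: "x \<in> space M" "x \<notin> N" for x
  proof -
    have L: "Liminf (at_right 0) (\<lambda>r. ereal (r powr (-\<gamma>) * Q x r)) = 0" using N x by auto
    show ?thesis unfolding W_def
    proof (intro CollectI allI impI)
      fix c \<epsilon> :: real assume c: "0 < c" and \<epsilon>: "0 < \<epsilon>"
      have "\<not> ereal c \<le> Liminf (at_right 0) (\<lambda>r. ereal (r powr (-\<gamma>) * Q x r))" using L c by simp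
      then obtain y where y: "y < ereal c" "\<not> eventually (\<lambda>r. y < ereal (r powr (-\<gamma>) * Q x r)) (at_right 0)"
        unfolding le_Liminf_iff by auto
      have "\<not> (\<forall>r>0. r < min \<epsilon> 1 \<longrightarrow> y < ereal (r powr (-\<gamma>) * Q x r))"
      proof
        assume H: "\<forall>r>0. r < min \<epsilon> 1 \<longrightarrow> y < ereal (r powr (-\<gamma>) * Q x r)"
        have "\<exists>b>0. \<forall>r>0. r < b \<longrightarrow> y < ereal (r powr (-\<gamma>) * Q x r)"
          using H \<epsilon> by (intro exI[of _ "min \<epsilon> 1"]) auto
        then show False using y(2) unfolding eventually_at_right_field by blast
      qed
      then obtain r where r: "0 < r" "r < min \<epsilon> 1" "\<not> y < ereal (r powr (-\<gamma>) * Q x r)" by auto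
      have "ereal (r powr (-\<gamma>) * Q x r) < ereal c" using r(3) y(1) by (meson le_less_trans not_less)
      then have "Q x r / r powr \<gamma> < c" by (simp add: powr_minus divide_inverse mult.commute)
      then have Qc: "Q x r < c * r powr \<gamma>" using r by (simp add: pos_divide_less_eq)
      have "measure \<nu> (cball (h x) r) \<le> Q x r" using Qlow[OF x(1) r(1)] \<nu>_def by simp
      also have "\<dots> < c * r powr \<gamma>" by fact
      also have "\<dots> \<le> c * r powr s"
        using r s c by (intro mult_left_mono powr_mono') auto
      finally show "\<exists>r. 0 < r \<and> r < \<epsilon> \<and> measure \<nu> (cball (h x) r) < c * r powr s"
        using r by auto
    qed
  qed
  have hU[measurable]: "h -` U \<inter> space M \<in> sets M" if "U \<in> sets borel" for U
    using h that by (rule measurable_sets)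
  have "emeasure M (h -` E \<inter> space M) \<le> 0"
  proof (rule ennreal_le_epsilon)
    fix e :: real assume e: "0 < e"
    have "packing_measure s E < ennreal (e/2)" using s e by simp
    then obtain A where A: "E \<subseteq> (\<Union>i. A i)" "(\<Sum>i. packing_premeasure s (A i)) < ennreal (e/2)"
      unfolding packing_measure_def by (auto simp: INF_less_iff)
    define ei where "ei i = e/2 * (1/2)^Suc i" for i :: nat
    have ei_pos: "0 < ei i" for i using e by (simp add: ei_def)
    have "\<exists>U. U \<in> sets borel \<and> A i \<inter> W \<subseteq> U \<and> emeasure \<nu> U \<le> packing_premeasure s (A i) + ennreal (ei i)" for i
    proof -
      have "packing_premeasure s (A i) < ennreal (e/2)"
        using A(2) by (rule ennreal_suminf_lessD)
      then have "packing_premeasure s (A i) \<noteq> \<infinity>" by (auto simp: top_unique)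
      then have "packing_premeasure s (A i) + 0 < packing_premeasure s (A i) + ennreal (ei i)"
        using ei_pos[of i] by (subst ennreal_add_left_cancel_less) auto
      then obtain \<delta> where \<delta>: "0 < \<delta>" "packing_pre_delta s \<delta> (A i) < packing_premeasure s (A i) + ennreal (ei i)"
        using premeasure_lessD by force
      obtain U where U: "U \<in> sets borel" "A i \<inter> W \<subseteq> U" "emeasure \<nu> U \<le> packing_pre_delta s \<delta> (A i \<inter> W)"
        using vitali_bound[OF fin sets_nu s(1) \<delta>(1), of "A i \<inter> W"] unfolding W_def by blast
      have "emeasure \<nu> U \<le> packing_pre_delta s \<delta> (A i)"
        using U(3) pre_delta_mono[of "A i \<inter> W" "A i" s \<delta>] by (meson Int_lower1 order_trans)
      then show ?thesis using U \<delta> by (intro exI[of _ U]) auto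
    qed
    then obtain U where U: "\<And>i. U i \<in> sets borel" "\<And>i. A i \<inter> W \<subseteq> U i"
      "\<And>i. emeasure \<nu> (U i) \<le> packing_premeasure s (A i) + ennreal (ei i)" by metis
    have sub: "h -` E \<inter> space M \<subseteq> N \<union> (\<Union>i. h -` U i \<inter> space M)"
    proof
      fix x assume x: "x \<in> h -` E \<inter> space M"
      show "x \<in> N \<union> (\<Union>i. h -` U i \<inter> space M)"
      proof (cases "x \<in> N")
        case False
        then have "h x \<in> W" using W x by auto
        moreover obtain i where "h x \<in> A i" using A(1) x by auto
        ultimately show ?thesis using U(2)[of i] x by auto
      qed simp
    qed
    have UM: "(\<Union>i. h -` U i \<inter> space M) \<in> sets M" using U(1) hU by (intro sets.countable_UN) auto
    have eisum: "(\<Sum>i. ennreal (ei i)) = ennreal (e/2)"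
    proof -
      have "ei sums (e/2 * 1)" unfolding ei_def by (intro sums_mult power_half_series)
      then have "(\<lambda>i. ennreal (ei i)) sums ennreal (e/2)" using ei_pos e by (subst sums_ennreal) (auto intro: less_imp_le)
      then show ?thesis by (rule sums_unique[symmetric])
    qed
    have "emeasure M (h -` E \<inter> space M) \<le> emeasure M (N \<union> (\<Union>i. h -` U i \<inter> space M))"
      using UM N(3) by (intro emeasure_mono[OF sub] sets.Un)
    also have "\<dots> \<le> emeasure M N + emeasure M (\<Union>i. h -` U i \<inter> space M)"
      using N(3) UM by (intro emeasure_subadditive)
    also have "\<dots> = emeasure M (\<Union>i. h -` U i \<inter> space M)" using N(2) by simp
    also have "\<dots> \<le> (\<Sum>i. emeasure M (h -` U i \<inter> space M))"
      using U(1) by (intro emeasure_subadditive_countably) auto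
    also have "\<dots> = (\<Sum>i. emeasure \<nu> (U i))"
      unfolding \<nu>_def using U(1) h by (simp add: emeasure_distr)
    also have "\<dots> \<le> (\<Sum>i. packing_premeasure s (A i) + ennreal (ei i))"
      using U(3) by (intro suminf_le) auto
    also have "\<dots> = (\<Sum>i. packing_premeasure s (A i)) + (\<Sum>i. ennreal (ei i))"
      by (rule suminf_add[symmetric]) auto
    also have "\<dots> \<le> ennreal (e/2) + ennreal (e/2)"
      using A(2) eisum by (intro add_mono) auto
    also have "\<dots> = 0 + ennreal e" using e by (simp flip: ennreal_plus)
    finally show "emeasure M (h -` E \<inter> space M) \<le> 0 + ennreal e" .
  qed
  moreover have "emeasure (distr M borel h) E = emeasure M (h -` E \<inter> space M)"
    using h E(1) by (simp add: emeasure_distr)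
  ultimately show False using E(2) by simp
qed


definition fpw :: "real \<Rightarrow> real \<Rightarrow> ennreal" where
  "fpw \<eta> t = (if t = 0 then \<top> else ennreal (\<bar>t\<bar> powr (\<eta> - 1)))"

lemma borel_fpw[measurable]: "fpw \<eta> \<in> borel_measurable borel"
  unfolding fpw_def by measurable

lemma one_dim:
  assumes \<eta>: "0 < \<eta>" "\<eta> < 1" and M: "0 < M"
  shows "(\<integral>\<^sup>+ t. fpw \<eta> (c - t) * indicator {-M..M} t \<partial>lborel) \<le> ennreal (2 * (M powr \<eta> / \<eta>) + 2 * M powr \<eta>)"
proof -
  define g where "g u = fpw \<eta> u * indicator {-M..M} u" for u
  define hh where "hh u = ennreal (indicator {0..M} u * u powr (\<eta> - 1))" for u :: real
  have [measurable]: "g \<in> borel_measurable borel" "hh \<in> borel_measurable borel"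
    unfolding g_def hh_def by measurable
  have int_hh: "(\<integral>\<^sup>+ u. hh u \<partial>lborel) = ennreal (M powr \<eta> / \<eta>)"
    unfolding hh_def
    using nn_integral_has_integral_lebesgue[OF _ has_integral_powr_from_0[of "\<eta>-1" M]] \<eta> M by simp
  have int_hh': "(\<integral>\<^sup>+ u. hh (-u) \<partial>lborel) = ennreal (M powr \<eta> / \<eta>)"
    using nn_integral_real_affine[of hh "-1" 0] int_hh by simp
  have "(\<integral>\<^sup>+ u. g u \<partial>lborel) \<le> (\<integral>\<^sup>+ u. hh u + hh (-u) \<partial>lborel)"
  proof (intro nn_integral_mono_AE)
    show "AE u in lborel. g u \<le> hh u + hh (-u)"
      using AE_lborel_singleton[of 0]
    proof eventually_elim
      case (elim u)
      show ?case
      proof (cases "0 < u")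
        case True
        then have "g u = hh u" using elim
          by (auto simp: g_def hh_def fpw_def indicator_def)
        then show ?thesis by (simp add: add_increasing2)
      next
        case False
        then have "u < 0" using elim by simp
        then have "g u = hh (-u)"
          by (auto simp: g_def hh_def fpw_def indicator_def)
        then show ?thesis by (simp add: add_increasing)
      qed
    qed
  qed
  also have "\<dots> = ennreal (2 * (M powr \<eta> / \<eta>))"
    using int_hh int_hh' \<eta> M by (subst nn_integral_add) (auto simp flip: ennreal_plus)
  finally have int_g: "(\<integral>\<^sup>+ u. g u \<partial>lborel) \<le> ennreal (2 * (M powr \<eta> / \<eta>))" .
  have int_g': "(\<integral>\<^sup>+ t. g (c - t) \<partial>lborel) = (\<integral>\<^sup>+ u. g u \<partial>lborel)"
    using nn_integral_real_affine[of g "-1" c] by simp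
  have "(\<integral>\<^sup>+ t. fpw \<eta> (c - t) * indicator {-M..M} t \<partial>lborel) \<le>
        (\<integral>\<^sup>+ t. g (c - t) + ennreal (M powr (\<eta> - 1)) * indicator {-M..M} t \<partial>lborel)"
  proof (intro nn_integral_mono)
    fix t
    show "fpw \<eta> (c - t) * indicator {-M..M} t \<le> g (c - t) + ennreal (M powr (\<eta> - 1)) * indicator {-M..M} t"
    proof (cases "\<bar>c - t\<bar> \<le> M")
      case True
      then have "fpw \<eta> (c - t) * indicator {-M..M} t \<le> g (c - t)"
        by (auto simp: g_def indicator_def)
      then show ?thesis by (simp add: add_increasing2)
    next
      case False
      then have "c - t \<noteq> 0" using M by auto
      then have "fpw \<eta> (c - t) \<le> ennreal (M powr (\<eta> - 1))"
        using False M \<eta> by (auto simp: fpw_def intro!: ennreal_leI powr_mono2')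
      then have "fpw \<eta> (c - t) * indicator {-M..M} t \<le> ennreal (M powr (\<eta> - 1)) * indicator {-M..M} t"
        by (auto simp: indicator_def)
      then show ?thesis by (simp add: add_increasing)
    qed
  qed
  also have "\<dots> = (\<integral>\<^sup>+ t. g (c - t) \<partial>lborel) + ennreal (M powr (\<eta> - 1)) * emeasure lborel {-M..M}"
    by (subst nn_integral_add) (auto simp: nn_integral_cmult_indicator)
  also have "\<dots> \<le> ennreal (2 * (M powr \<eta> / \<eta>)) + ennreal (2 * M powr \<eta>)"
  proof (intro add_mono)
    show "(\<integral>\<^sup>+ t. g (c - t) \<partial>lborel) \<le> ennreal (2 * (M powr \<eta> / \<eta>))" using int_g int_g' by simp
    have "M powr (\<eta> - 1) * (M - - M) = 2 * M powr \<eta>"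
      using M by (simp add: powr_diff field_simps)
    then show "ennreal (M powr (\<eta> - 1)) * emeasure lborel {-M..M} \<le> ennreal (2 * M powr \<eta>)"
      using M by (simp flip: ennreal_mult)
  qed
  also have "\<dots> = ennreal (2 * (M powr \<eta> / \<eta>) + 2 * M powr \<eta>)"
    using M \<eta> by (simp flip: ennreal_plus)
  finally show ?thesis .
qed

lemma powr_pow_nat: "0 < r \<Longrightarrow> (r powr a) ^ n = r powr (a * real n)"
  by (induct n) (auto simp: powr_add distrib_left mult.commute)

lemma key_ineq:
  fixes z w y :: "'a::euclidean_space" and r \<eta> :: real
  assumes r: "0 < r" and y: "dist w y \<le> r" and nz: "\<And>b. b \<in> Basis \<Longrightarrow> (z - y) \<bullet> b \<noteq> 0"
    and \<eta>: "0 < \<eta>" "\<eta> < 1"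
  shows "r powr (\<eta> * DIM('a)) * Kr r (z - w) \<le> (2*r)^DIM('a) * (\<Prod>b\<in>Basis. \<bar>(z - y) \<bullet> b\<bar> powr (\<eta> - 1))"
proof -
  have "r powr (\<eta> * DIM('a)) * Kr r (z - w) = (\<Prod>b\<in>(Basis::'a set). r powr \<eta> * (r / max r \<bar>(z - w) \<bullet> b\<bar>))"
    unfolding Kr_def prod.distrib using r by (simp add: powr_pow_nat)
  also have "\<dots> \<le> (\<Prod>b\<in>(Basis::'a set). 2 * r * \<bar>(z - y) \<bullet> b\<bar> powr (\<eta> - 1))"
  proof (intro prod_mono conjI)
    fix b :: 'a assume b: "b \<in> Basis"
    show "0 \<le> r powr \<eta> * (r / max r \<bar>(z - w) \<bullet> b\<bar>)" using r by auto
    define a where "a = \<bar>(z - w) \<bullet> b\<bar>"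
    define a' where "a' = \<bar>(z - y) \<bullet> b\<bar>"
    define m where "m = max r a'"
    have a'pos: "0 < a'" using nz[OF b] by (simp add: a'_def)
    have "\<bar>(y - w) \<bullet> b\<bar> \<le> norm (y - w)" using b by (rule Basis_le_norm)
    also have "\<dots> \<le> r" using y by (simp add: dist_norm norm_minus_commute)
    finally have yw: "\<bar>(y - w) \<bullet> b\<bar> \<le> r" .
    have "(z - y) \<bullet> b = (z - w) \<bullet> b - (y - w) \<bullet> b" by (simp add: inner_diff_left)
    then have "a' \<le> a + r" using yw unfolding a_def a'_def by linarith
    moreover have "0 \<le> a" by (simp add: a_def)
    ultimately have mle: "m \<le> 2 * max r a" unfolding m_def using r by (auto simp: max_def)
    have mpos: "0 < m" using r by (simp add: m_def)
    have "r / max r a \<le> 2 * r / m"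
      using mle r mpos by (simp add: field_simps max_def split: if_splits)
    then have "r powr \<eta> * (r / max r a) \<le> m powr \<eta> * (2 * r / m)"
      using r mpos \<eta> by (intro mult_mono powr_mono2) (auto simp: m_def)
    also have "\<dots> = 2 * r * m powr (\<eta> - 1)"
      using mpos by (simp add: powr_diff)
    also have "\<dots> \<le> 2 * r * a' powr (\<eta> - 1)"
      using r a'pos \<eta> by (intro mult_left_mono powr_mono2') (auto simp: m_def)
    finally show "r powr \<eta> * (r / max r \<bar>(z - w) \<bullet> b\<bar>) \<le> 2 * r * \<bar>(z - y) \<bullet> b\<bar> powr (\<eta> - 1)"
      unfolding a_def a'_def .
  qed
  also have "\<dots> = (2*r)^DIM('a) * (\<Prod>b\<in>Basis. \<bar>(z - y) \<bullet> b\<bar> powr (\<eta> - 1))"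
    by (simp add: prod.distrib)
  finally show ?thesis .
qed

definition Cc :: "nat \<Rightarrow> real \<Rightarrow> real \<Rightarrow> real" where
  "Cc D L e = 2^D / unit_ball_vol D * (2 * ((L+1) powr (e/D) / (e/D)) + 2 * (L+1) powr (e/D))^D"

lemma fpw_nz: "fpw \<eta> t \<noteq> 0"
  by (simp add: fpw_def)

lemma core_bound:
  fixes z :: "'a::euclidean_space" and P :: "('a \<times> real) set" and e L :: real
  assumes P: "countable P" "\<And>p. p \<in> P \<Longrightarrow> (\<forall>b\<in>Basis. \<bar>fst p \<bullet> b\<bar> \<le> L) \<and> 0 < snd p \<and> snd p \<le> 1"
    "\<And>p q. p \<in> P \<Longrightarrow> q \<in> P \<Longrightarrow> p \<noteq> q \<Longrightarrow> cball (fst p) (snd p) \<inter> cball (fst q) (snd q) = {}"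
    and e: "0 < e" "e < real DIM('a)" and L: "0 \<le> L"
  shows "(\<integral>\<^sup>+ p. ennreal (snd p powr e * Kr (snd p) (z - fst p)) \<partial>count_space P) \<le> ennreal (Cc DIM('a) L e)"
proof -
  define D where "D = DIM('a)"
  define \<eta> where "\<eta> = e / D"
  define M where "M = L + 1"
  define V where "V = unit_ball_vol D"
  define B where "B = 2 * (M powr \<eta> / \<eta>) + 2 * M powr \<eta>"
  have Dpos: "0 < D" by (simp add: D_def)
  have \<eta>: "0 < \<eta>" "\<eta> < 1" using e Dpos by (auto simp: \<eta>_def D_def field_simps)
  have e_eq: "e = \<eta> * D" using Dpos by (simp add: \<eta>_def)
  have Vpos: "0 < V" by (simp add: V_def)
  have Mpos: "0 < M" using L by (simp add: M_def)
  have Bpos: "0 \<le> B" using Mpos \<eta> by (simp add: B_def)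
  define F where "F y = (\<Prod>b\<in>Basis. fpw \<eta> ((z - y) \<bullet> b))" for y
  have F_meas[measurable]: "F \<in> borel_measurable borel"
    unfolding F_def by measurable
  define box where "box = {y::'a. \<forall>b\<in>Basis. \<bar>y \<bullet> b\<bar> \<le> M}"
  have step1: "ennreal (r powr e * Kr r (z - w)) \<le> ennreal (2^D / V) * (\<integral>\<^sup>+ y. F y * indicator (cball w r) y \<partial>lborel)"
    if r: "0 < r" for w r
  proof -
    define c where "c = r powr e * Kr r (z - w) / (2^D * r^D)"
    have c0: "0 \<le> c" using r Kr_nonneg[OF r, of "z - w"] unfolding c_def
      by (intro divide_nonneg_pos mult_nonneg_nonneg) auto
    have pt: "ennreal c \<le> F y" if y: "y \<in> cball w r" for y
    proof (cases "\<exists>b\<in>Basis. (z - y) \<bullet> b = 0")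
      case True
      then have "F y = \<top>" unfolding F_def
        by (subst ennreal_prod_eq_top) (auto simp: fpw_nz fpw_def)
      then show ?thesis by simp
    next
      case False
      then have "F y = ennreal (\<Prod>b\<in>Basis. \<bar>(z - y) \<bullet> b\<bar> powr (\<eta> - 1))"
        unfolding F_def by (subst prod_ennreal[symmetric]) (auto simp: fpw_def intro!: prod.cong)
      moreover have "c \<le> (\<Prod>b\<in>Basis. \<bar>(z - y) \<bullet> b\<bar> powr (\<eta> - 1))"
      proof -
        have "r powr e * Kr r (z - w) \<le> (2*r)^D * (\<Prod>b\<in>Basis. \<bar>(z - y) \<bullet> b\<bar> powr (\<eta> - 1))"
          using key_ineq[OF r _ _ \<eta>, of w y z] y False unfolding e_eq D_def by auto
        then show ?thesis using r unfolding c_def by (simp add: divide_le_eq power_mult_distrib mult.commute)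
      qed
      ultimately show ?thesis by (simp add: ennreal_leI)
    qed
    have "ennreal c * emeasure lborel (cball w r) = (\<integral>\<^sup>+ y. ennreal c * indicator (cball w r) y \<partial>lborel)"
      by (simp add: nn_integral_cmult_indicator)
    also have "\<dots> \<le> (\<integral>\<^sup>+ y. F y * indicator (cball w r) y \<partial>lborel)"
      using pt by (intro nn_integral_mono) (auto simp: indicator_def)
    finally have I: "ennreal c * ennreal (V * r^D) \<le> (\<integral>\<^sup>+ y. F y * indicator (cball w r) y \<partial>lborel)"
      using r by (simp add: emeasure_cball V_def D_def)
    have eq: "r powr e * Kr r (z - w) = 2^D / V * (c * (V * r^D))"
      using r Vpos by (simp add: c_def field_simps)
    have "ennreal (r powr e * Kr r (z - w)) = ennreal (2^D / V) * (ennreal c * ennreal (V * r^D))"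
      unfolding eq using Vpos c0 r
      by (subst ennreal_mult, simp, simp, subst ennreal_mult, auto)
    also have "\<dots> \<le> ennreal (2^D / V) * (\<integral>\<^sup>+ y. F y * indicator (cball w r) y \<partial>lborel)"
      by (intro mult_left_mono I) auto
    finally show ?thesis .
  qed
  have disj: "(\<integral>\<^sup>+ p. indicator (cball (fst p) (snd p)) y \<partial>count_space P) \<le> indicator box y" for y
  proof (cases "\<exists>p0\<in>P. y \<in> cball (fst p0) (snd p0)")
    case True
    then obtain p0 where p0: "p0 \<in> P" "y \<in> cball (fst p0) (snd p0)" by auto
    have "(\<integral>\<^sup>+ p. indicator (cball (fst p) (snd p)) y \<partial>count_space P) = (\<Sum>p\<in>{p0}. indicator (cball (fst p) (snd p)) y)"
    proof (rule nn_integral_count_space')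
      fix p assume "p \<in> P" "p \<notin> {p0}"
      then show "indicator (cball (fst p) (snd p)) y = (0::ennreal)"
        using P(3)[of p p0] p0 by (auto simp: indicator_def)
    qed (use p0 in auto)
    also have "\<dots> = 1" using p0 by simp
    also have "\<dots> = indicator box y"
    proof -
      have "y \<in> box" unfolding box_def mem_Collect_eq
      proof
        fix b :: 'a assume b: "b \<in> Basis"
        have "\<bar>(y - fst p0) \<bullet> b\<bar> \<le> norm (y - fst p0)" using b by (rule Basis_le_norm)
        also have "\<dots> \<le> 1" using p0 P(2)[OF p0(1)] by (simp add: dist_norm norm_minus_commute)
        finally have "\<bar>(y - fst p0) \<bullet> b\<bar> \<le> 1" .
        moreover have "\<bar>fst p0 \<bullet> b\<bar> \<le> L" using P(2)[OF p0(1)] b by auto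
        moreover have "y \<bullet> b = (y - fst p0) \<bullet> b + fst p0 \<bullet> b" by (simp add: inner_diff_left)
        ultimately show "\<bar>y \<bullet> b\<bar> \<le> M" unfolding M_def by linarith
      qed
      then show ?thesis by simp
    qed
    finally show ?thesis by simp
  next
    case False
    then have "(\<integral>\<^sup>+ p. indicator (cball (fst p) (snd p)) y \<partial>count_space P) = (\<integral>\<^sup>+ p. 0 \<partial>count_space P)"
      by (intro nn_integral_cong) (auto simp: indicator_def)
    then show ?thesis by simp
  qed
  have "(\<integral>\<^sup>+ p. ennreal (snd p powr e * Kr (snd p) (z - fst p)) \<partial>count_space P) \<le>
        (\<integral>\<^sup>+ p. ennreal (2^D / V) * (\<integral>\<^sup>+ y. F y * indicator (cball (fst p) (snd p)) y \<partial>lborel) \<partial>count_space P)"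
    using P(2) by (intro nn_integral_mono step1) auto
  also have "\<dots> = ennreal (2^D / V) * (\<integral>\<^sup>+ p. (\<integral>\<^sup>+ y. F y * indicator (cball (fst p) (snd p)) y \<partial>lborel) \<partial>count_space P)"
    by (rule nn_integral_cmult) auto
  also have "(\<integral>\<^sup>+ p. (\<integral>\<^sup>+ y. F y * indicator (cball (fst p) (snd p)) y \<partial>lborel) \<partial>count_space P) =
      (\<integral>\<^sup>+ y. (\<integral>\<^sup>+ p. F y * indicator (cball (fst p) (snd p)) y \<partial>count_space P) \<partial>lborel)"
    by (rule nn_integral_count_space_nn_integral[symmetric]) (auto intro!: P(1) borel_measurable_times_ennreal borel_measurable_indicator borel_closed)
  also have "\<dots> \<le> (\<integral>\<^sup>+ y. F y * indicator box y \<partial>lborel)"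
  proof (intro nn_integral_mono)
    fix y
    have "(\<integral>\<^sup>+ p. F y * indicator (cball (fst p) (snd p)) y \<partial>count_space P) =
          F y * (\<integral>\<^sup>+ p. indicator (cball (fst p) (snd p)) y \<partial>count_space P)"
      by (rule nn_integral_cmult) auto
    also have "\<dots> \<le> F y * indicator box y"
      by (intro mult_left_mono disj) auto
    finally show "(\<integral>\<^sup>+ p. F y * indicator (cball (fst p) (snd p)) y \<partial>count_space P) \<le> F y * indicator box y" .
  qed
  also have "(\<integral>\<^sup>+ y. F y * indicator box y \<partial>lborel) =
     (\<integral>\<^sup>+ y. (\<Prod>b\<in>Basis. fpw \<eta> (z \<bullet> b - y \<bullet> b) * indicator {-M..M} (y \<bullet> b)) \<partial>lborel)"
  proof (intro nn_integral_cong)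
    fix y :: 'a
    have ib: "indicator box y = (\<Prod>b\<in>Basis. indicator {-M..M} (y \<bullet> b) :: ennreal)"
    proof (cases "y \<in> box")
      case True
      then have "\<forall>b\<in>Basis. y \<bullet> b \<in> {-M..M}" by (auto simp: box_def abs_le_iff)
      then show ?thesis using True by (subst prod.neutral) (auto simp: indicator_def)
    next
      case False
      then obtain b where "b \<in> Basis" "\<bar>y \<bullet> b\<bar> > M" by (auto simp: box_def not_le)
      then have "(\<Prod>b\<in>Basis. indicator {-M..M} (y \<bullet> b) :: ennreal) = 0"
        by (intro prod_zero) (auto simp: indicator_def intro!: bexI[of _ b])
      then show ?thesis using False by simp
    qed
    show "F y * indicator box y = (\<Prod>b\<in>Basis. fpw \<eta> (z \<bullet> b - y \<bullet> b) * indicator {-M..M} (y \<bullet> b))"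
      unfolding ib F_def prod.distrib by (simp add: inner_diff_left)
  qed
  also have "\<dots> = (\<Prod>b\<in>Basis. (\<integral>\<^sup>+ t. fpw \<eta> (z \<bullet> b - t) * indicator {-M..M} t \<partial>lborel))"
    by (rule nn_integral_lborel_prod) auto
  also have "\<dots> \<le> (\<Prod>b\<in>(Basis::'a set). ennreal B)"
    by (intro prod_mono_ennreal one_dim[OF \<eta> Mpos, unfolded B_def[symmetric]])
  also have "\<dots> = ennreal (B ^ D)"
    using Bpos by (simp add: D_def ennreal_power)
  finally have "(\<integral>\<^sup>+ p. ennreal (snd p powr e * Kr (snd p) (z - fst p)) \<partial>count_space P) \<le> ennreal (2^D / V) * ennreal (B ^ D)"
    by (simp add: mult_left_mono)
  also have "\<dots> = ennreal (Cc DIM('a) L e)"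
    using Vpos Bpos unfolding Cc_def B_def V_def M_def \<eta>_def D_def by (simp flip: ennreal_mult)
  finally show ?thesis .
qed


definition Gf :: "'a::euclidean_space measure \<Rightarrow> 'a \<Rightarrow> real \<Rightarrow> real" where
  "Gf \<nu> w r = (LINT z|\<nu>. Kr r (z - w))"

definition Eset :: "'a::euclidean_space measure \<Rightarrow> real \<Rightarrow> real \<Rightarrow> 'a set" where
  "Eset \<nu> \<gamma> \<kappa> = {w. \<forall>q\<in>\<rat>. 0 < q \<and> q < 1/\<kappa> \<longrightarrow> q powr \<gamma> / \<kappa> \<le> Gf \<nu> w q}"

lemma Kr_shift_borel: "0 < r \<Longrightarrow> (\<lambda>z. Kr r (z - w)) \<in> borel_measurable (borel :: 'a::euclidean_space measure)"
  by (rule measurable_compose[OF _ borel_Kr]) auto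

context
  fixes \<nu> :: "'a::euclidean_space measure"
  assumes fin: "finite_measure \<nu>" and sets_nu: "sets \<nu> = sets borel"
begin

interpretation finite_measure \<nu> by (rule fin)

lemma Kr_shift_meas: "0 < r \<Longrightarrow> (\<lambda>z. Kr r (z - w)) \<in> borel_measurable \<nu>"
  using Kr_shift_borel measurable_cong_sets[OF sets_nu refl] by blast

lemma Kr_shift_int: "0 < r \<Longrightarrow> integrable \<nu> (\<lambda>z. Kr r (z - w))"
  by (intro integrable_const_bound[where B=1] Kr_shift_meas) (auto simp: Kr_le1 Kr_nonneg)

lemma Gf_nn: "0 < r \<Longrightarrow> ennreal (Gf \<nu> w r) = (\<integral>\<^sup>+ z. ennreal (Kr r (z - w)) \<partial>\<nu>)"
  unfolding Gf_def by (rule nn_integral_eq_integral[symmetric]) (auto intro: Kr_shift_int Kr_nonneg)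

lemma Gf_mono: "0 < r \<Longrightarrow> r \<le> r' \<Longrightarrow> Gf \<nu> w r \<le> Gf \<nu> w r'"
  unfolding Gf_def by (intro integral_mono Kr_shift_int Kr_mono) auto

lemma Gf_nonneg: "0 < r \<Longrightarrow> 0 \<le> Gf \<nu> w r"
  unfolding Gf_def by (intro integral_nonneg_AE) (auto intro: Kr_nonneg)

lemma Gf_le: "0 < r \<Longrightarrow> Gf \<nu> w r \<le> measure \<nu> (space \<nu>)"
proof -
  assume r: "0 < r"
  have "Gf \<nu> w r \<le> (LINT z|\<nu>. 1)"
    unfolding Gf_def using r by (intro integral_mono Kr_shift_int) (auto simp: Kr_le1)
  then show ?thesis by simp
qed

lemma Gf_meas: "0 < r \<Longrightarrow> (\<lambda>w. Gf \<nu> w r) \<in> borel_measurable borel"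
proof -
  assume r: "0 < r"
  have c: "continuous_on UNIV (\<lambda>p::'a\<times>'a. Kr r (snd p - fst p))"
    by (intro continuous_on_compose2[OF continuous_Kr[OF r]] continuous_intros) auto
  have "(\<lambda>p::'a\<times>'a. Kr r (snd p - fst p)) \<in> borel_measurable (borel \<Otimes>\<^sub>M borel)"
    unfolding borel_prod using c by (intro borel_measurable_continuous_onI) auto
  then have "(\<lambda>p::'a\<times>'a. Kr r (snd p - fst p)) \<in> borel_measurable (borel \<Otimes>\<^sub>M \<nu>)"
    using measurable_cong_sets[OF sets_pair_measure_cong[OF refl sets_nu] refl] by blast
  then have "case_prod (\<lambda>w z. Kr r (z - w)) \<in> borel_measurable (borel \<Otimes>\<^sub>M \<nu>)"
    by (simp add: case_prod_beta')
  then show ?thesis unfolding Gf_def by (rule borel_measurable_lebesgue_integral)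
qed

lemma Eset_borel: "Eset \<nu> \<gamma> \<kappa> \<in> sets borel"
proof -
  have "Eset \<nu> \<gamma> \<kappa> = (\<Inter>q\<in>{q\<in>\<rat>. 0 < q \<and> q < 1/\<kappa>}. {w. q powr \<gamma> / \<kappa> \<le> Gf \<nu> w q})"
    unfolding Eset_def by auto
  also have "\<dots> \<in> sets borel"
  proof (rule sets.countable_INT'')
    show "countable {q\<in>\<rat>. 0 < q \<and> q < 1/\<kappa>}"
      by (rule countable_subset[OF _ countable_rat]) auto
    fix q assume "q \<in> {q\<in>\<rat>. 0 < q \<and> q < 1/\<kappa>}"
    then have q: "0 < q" by auto
    have [measurable]: "(\<lambda>w. Gf \<nu> w q) \<in> borel_measurable borel" using Gf_meas[OF q] .
    show "{w. q powr \<gamma> / \<kappa> \<le> Gf \<nu> w q} \<in> sets borel" by measurable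
  qed auto
  finally show ?thesis .
qed

lemma Eset_bound:
  assumes w: "w \<in> Eset \<nu> \<gamma> \<kappa>" and \<kappa>: "0 < \<kappa>" and \<gamma>: "0 \<le> \<gamma>" and r: "0 < r" "r \<le> 1 / (2 * \<kappa>)"
  shows "r powr \<gamma> \<le> 2 powr \<gamma> * \<kappa> * Gf \<nu> w r"
proof -
  obtain q where q: "q \<in> \<rat>" "r/2 < q" "q < r" using Rats_dense_in_real[of "r/2" r] r by auto
  have "r < 1/\<kappa>" using r \<kappa> by (auto simp: field_simps)
  then have "q powr \<gamma> / \<kappa> \<le> Gf \<nu> w q" using w q r unfolding Eset_def by auto
  also have "\<dots> \<le> Gf \<nu> w r" using q r by (intro Gf_mono) auto
  finally have "q powr \<gamma> \<le> \<kappa> * Gf \<nu> w r" using \<kappa> by (simp add: field_simps)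
  moreover have "(r/2) powr \<gamma> \<le> q powr \<gamma>" using q r \<gamma> by (intro powr_mono2) auto
  moreover have "r powr \<gamma> = 2 powr \<gamma> * (r/2) powr \<gamma>" by (simp add: powr_divide)
  ultimately show ?thesis by (simp add: mult.assoc)
qed

lemma premeasure_zero:
  assumes \<gamma>: "0 \<le> \<gamma>" "\<gamma> < t" and \<kappa>: "0 < \<kappa>" and L: "0 \<le> L"
    and A: "A \<subseteq> Eset \<nu> \<gamma> \<kappa> \<inter> {w. \<forall>b\<in>Basis. \<bar>w \<bullet> b\<bar> \<le> L}"
  shows "packing_premeasure t A = 0"
proof -
  define \<epsilon> where "\<epsilon> = t - \<gamma>"
  define e where "e = min \<epsilon> 1 / 2"
  define e0 where "e0 = \<epsilon> - e"
  have \<epsilon>: "0 < \<epsilon>" using \<gamma> by (simp add: \<epsilon>_def)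
  have e: "0 < e" "e < 1" "0 < e0" using \<epsilon> by (auto simp: e_def e0_def)
  have "0 < DIM('a)" by (rule DIM_positive)
  then have D1: "(1::real) \<le> real DIM('a)" by linarith
  have eD: "e < real DIM('a)" using e(2) D1 by linarith
  define C where "C = max (Cc DIM('a) L e) 0"
  define Vm where "Vm = measure \<nu> (space \<nu>)"
  define K where "K = 2 powr (t + \<gamma>) * \<kappa> * C * Vm"
  have C0: "0 \<le> C" and Vm0: "0 \<le> Vm" by (auto simp: C_def Vm_def)
  have K0: "0 \<le> K" using C0 Vm0 \<kappa> by (simp add: K_def)
  have "packing_premeasure t A \<le> 0"
  proof (rule ennreal_le_epsilon)
    fix \<eta> :: real assume \<eta>: "0 < \<eta>"
    define \<delta> where "\<delta> = min (min 1 (1/(2*\<kappa>))) ((\<eta>/(K+1)) powr (1/e0))"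
    have \<delta>: "0 < \<delta>" "\<delta> \<le> 1" "\<delta> \<le> 1/(2*\<kappa>)" using \<kappa> \<eta> K0 by (auto simp: \<delta>_def)
    have "\<delta> powr e0 \<le> ((\<eta>/(K+1)) powr (1/e0)) powr e0"
      using \<delta> e by (intro powr_mono2) (auto simp: \<delta>_def)
    also have "\<dots> = \<eta>/(K+1)" using e \<eta> K0 by (simp add: powr_powr)
    finally have \<delta>e0: "\<delta> powr e0 \<le> \<eta>/(K+1)" .
    have K\<eta>: "K * \<delta> powr e0 \<le> \<eta>"
    proof -
      have "K * \<delta> powr e0 \<le> K * (\<eta>/(K+1))" using \<delta>e0 K0 by (intro mult_left_mono) auto
      also have "\<dots> \<le> \<eta>" using K0 \<eta> by (simp add: field_simps)
      finally show ?thesis .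
    qed
    define c1 where "c1 = 2 powr (t + \<gamma>) * \<kappa> * \<delta> powr e0"
    have c10: "0 \<le> c1" using \<kappa> by (simp add: c1_def)
    have "packing_premeasure t A \<le> packing_pre_delta t \<delta> A"
      unfolding packing_premeasure_def using \<delta> by (intro INF_lower) auto
    also have "\<dots> \<le> ennreal (c1 * C * Vm)"
      unfolding packing_pre_delta_def
    proof (rule SUP_least)
      fix P assume "P \<in> {P. countable P \<and> P \<subseteq> A \<times> {0<..\<delta>} \<and>
          (\<forall>p\<in>P. \<forall>q\<in>P. p \<noteq> q \<longrightarrow> cball (fst p) (snd p) \<inter> cball (fst q) (snd q) = {})}"
      then have P: "countable P" "P \<subseteq> A \<times> {0<..\<delta>}"
        "\<And>p q. p \<in> P \<Longrightarrow> q \<in> P \<Longrightarrow> p \<noteq> q \<Longrightarrow> cball (fst p) (snd p) \<inter> cball (fst q) (snd q) = {}"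
        by auto
      have Pp: "fst p \<in> Eset \<nu> \<gamma> \<kappa>" "\<forall>b\<in>Basis. \<bar>fst p \<bullet> b\<bar> \<le> L" "0 < snd p" "snd p \<le> \<delta>" if "p \<in> P" for p
      proof -
        have fA: "fst p \<in> A" and sp: "snd p \<in> {0<..\<delta>}" using subsetD[OF P(2) that] by (simp_all add: mem_Times_iff)
        show "fst p \<in> Eset \<nu> \<gamma> \<kappa>" using A fA by blast
        show "\<forall>b\<in>Basis. \<bar>fst p \<bullet> b\<bar> \<le> L" using A fA by blast
        show "0 < snd p" "snd p \<le> \<delta>" using sp by auto
      qed
      have "(\<integral>\<^sup>+ p. ennreal ((2 * snd p) powr t) \<partial>count_space P) \<le>
            (\<integral>\<^sup>+ p. ennreal c1 * ennreal (snd p powr e * Gf \<nu> (fst p) (snd p)) \<partial>count_space P)"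
      proof (intro nn_integral_mono)
        fix p assume "p \<in> space (count_space P)"
        then have p: "p \<in> P" by simp
        define r where "r = snd p"
        have r: "0 < r" "r \<le> \<delta>" using Pp[OF p] by (auto simp: r_def)
        have G: "r powr \<gamma> \<le> 2 powr \<gamma> * \<kappa> * Gf \<nu> (fst p) r"
          using Eset_bound[OF Pp(1)[OF p] \<kappa> \<gamma>(1) r(1)] r \<delta> by (simp add: r_def)
        have "(2 * r) powr t = 2 powr t * (r powr e0 * (r powr e * r powr \<gamma>))"
          using r by (simp add: powr_mult flip: powr_add) (simp add: e0_def \<epsilon>_def)
        also have "\<dots> \<le> 2 powr t * (\<delta> powr e0 * (r powr e * (2 powr \<gamma> * \<kappa> * Gf \<nu> (fst p) r)))"
          using r e G by (intro mult_left_mono mult_mono powr_mono2) auto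
        also have "\<dots> = c1 * (r powr e * Gf \<nu> (fst p) r)"
          by (simp add: c1_def powr_add)
        finally have "(2 * r) powr t \<le> c1 * (r powr e * Gf \<nu> (fst p) r)" .
        then have le: "ennreal ((2 * r) powr t) \<le> ennreal (c1 * (r powr e * Gf \<nu> (fst p) r))"
          by (rule ennreal_leI)
        have "0 \<le> r powr e * Gf \<nu> (fst p) r" using r Gf_nonneg by auto
        then have "ennreal (c1 * (r powr e * Gf \<nu> (fst p) r)) = ennreal c1 * ennreal (r powr e * Gf \<nu> (fst p) r)"
          using c10 by (intro ennreal_mult)
        with le show "ennreal ((2 * snd p) powr t) \<le> ennreal c1 * ennreal (snd p powr e * Gf \<nu> (fst p) (snd p))"
          unfolding r_def by simp
      qed
      also have "\<dots> = ennreal c1 * (\<integral>\<^sup>+ p. ennreal (snd p powr e * Gf \<nu> (fst p) (snd p)) \<partial>count_space P)"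
        by (rule nn_integral_cmult) auto
      also have "(\<integral>\<^sup>+ p. ennreal (snd p powr e * Gf \<nu> (fst p) (snd p)) \<partial>count_space P) =
         (\<integral>\<^sup>+ p. (\<integral>\<^sup>+ z. ennreal (snd p powr e * Kr (snd p) (z - fst p)) \<partial>\<nu>) \<partial>count_space P)"
      proof (intro nn_integral_cong)
        fix p assume "p \<in> space (count_space P)"
        then have r: "0 < snd p" using Pp by auto
        have "ennreal (snd p powr e * Gf \<nu> (fst p) (snd p)) = ennreal (snd p powr e) * ennreal (Gf \<nu> (fst p) (snd p))"
          using r Gf_nonneg[OF r] by (simp add: ennreal_mult)
        also have "\<dots> = ennreal (snd p powr e) * (\<integral>\<^sup>+ z. ennreal (Kr (snd p) (z - fst p)) \<partial>\<nu>)"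
          by (simp add: Gf_nn[OF r])
        also have "\<dots> = (\<integral>\<^sup>+ z. ennreal (snd p powr e) * ennreal (Kr (snd p) (z - fst p)) \<partial>\<nu>)"
          using Kr_shift_meas[OF r] by (subst nn_integral_cmult) auto
        also have "\<dots> = (\<integral>\<^sup>+ z. ennreal (snd p powr e * Kr (snd p) (z - fst p)) \<partial>\<nu>)"
          using r by (intro nn_integral_cong) (simp add: ennreal_mult Kr_nonneg)
        finally show "ennreal (snd p powr e * Gf \<nu> (fst p) (snd p)) = (\<integral>\<^sup>+ z. ennreal (snd p powr e * Kr (snd p) (z - fst p)) \<partial>\<nu>)" .
      qed
      also have "\<dots> = (\<integral>\<^sup>+ z. (\<integral>\<^sup>+ p. ennreal (snd p powr e * Kr (snd p) (z - fst p)) \<partial>count_space P) \<partial>\<nu>)"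
      proof (rule nn_integral_count_space_nn_integral[symmetric])
        show "countable P" by fact
        fix p assume "p \<in> P"
        then have r: "0 < snd p" using Pp by auto
        show "(\<lambda>z. ennreal (snd p powr e * Kr (snd p) (z - fst p))) \<in> borel_measurable \<nu>"
          using Kr_shift_meas[OF r] by measurable
      qed
      also have "\<dots> \<le> (\<integral>\<^sup>+ z. ennreal C \<partial>\<nu>)"
      proof (intro nn_integral_mono)
        fix z
        have "(\<integral>\<^sup>+ p. ennreal (snd p powr e * Kr (snd p) (z - fst p)) \<partial>count_space P) \<le> ennreal (Cc DIM('a) L e)"
        proof (rule core_bound[OF P(1) _ P(3) e(1) eD L])
          fix p assume p: "p \<in> P"
          show "(\<forall>b\<in>Basis. \<bar>fst p \<bullet> b\<bar> \<le> L) \<and> 0 < snd p \<and> snd p \<le> 1"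
            using Pp(2,3,4)[OF p] \<delta>(2) by auto
        qed auto
        also have "\<dots> \<le> ennreal C" by (auto simp: C_def intro!: ennreal_leI)
        finally show "(\<integral>\<^sup>+ p. ennreal (snd p powr e * Kr (snd p) (z - fst p)) \<partial>count_space P) \<le> ennreal C" .
      qed
      also have "\<dots> = ennreal C * ennreal Vm"
        by (simp add: Vm_def emeasure_eq_measure)
      finally have X: "(\<integral>\<^sup>+ p. ennreal ((2 * snd p) powr t) \<partial>count_space P) \<le> ennreal c1 * (ennreal C * ennreal Vm)"
        by (simp add: mult_left_mono)
      have "ennreal c1 * (ennreal C * ennreal Vm) = ennreal (c1 * C * Vm)"
        using c10 C0 Vm0 by (simp add: ennreal_mult' mult.assoc)
      with X show "(\<integral>\<^sup>+ p. ennreal ((2 * snd p) powr t) \<partial>count_space P) \<le> ennreal (c1 * C * Vm)"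
        by simp
    qed
    also have "\<dots> \<le> ennreal \<eta>"
    proof (intro ennreal_leI)
      have "c1 * C * Vm = K * \<delta> powr e0" by (simp add: c1_def K_def)
      then show "c1 * C * Vm \<le> \<eta>" using K\<eta> by simp
    qed
    finally show "packing_premeasure t A \<le> 0 + ennreal \<eta>" by simp
  qed
  then show ?thesis by simp
qed

lemma packing_measure_zero:
  assumes \<gamma>: "0 \<le> \<gamma>" "\<gamma> < t" and \<kappa>: "0 < \<kappa>"
  shows "packing_measure t (Eset \<nu> \<gamma> \<kappa>) = 0"
proof -
  define A where "A i = Eset \<nu> \<gamma> \<kappa> \<inter> {w. \<forall>b\<in>Basis. \<bar>w \<bullet> b\<bar> \<le> real i}" for i :: nat
  have cov: "Eset \<nu> \<gamma> \<kappa> \<subseteq> (\<Union>i. A i)"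
  proof
    fix w assume w: "w \<in> Eset \<nu> \<gamma> \<kappa>"
    obtain i :: nat where i: "norm w \<le> real i" using real_arch_simple by blast
    have "\<forall>b\<in>Basis. \<bar>w \<bullet> b\<bar> \<le> real i" using i by (auto intro: order_trans[OF Basis_le_norm])
    then show "w \<in> (\<Union>i. A i)" using w by (auto simp: A_def)
  qed
  have "packing_measure t (Eset \<nu> \<gamma> \<kappa>) \<le> (\<Sum>i. packing_premeasure t (A i))"
    unfolding packing_measure_def using cov by (intro INF_lower) auto
  also have "\<dots> = 0"
  proof -
    have "packing_premeasure t (A i) = 0" for i
      using premeasure_zero[OF \<gamma> \<kappa>, of "real i" "A i"] by (auto simp: A_def)
    then show ?thesis by simp
  qed
  finally show ?thesis by simp
qed

end


lemma A_main:
  fixes h :: "'m \<Rightarrow> 'a::euclidean_space"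
  assumes M: "prob_space M" and h: "h \<in> M \<rightarrow>\<^sub>M borel"
    and Qnn: "\<And>x r. x \<in> space M \<Longrightarrow> 0 < r \<Longrightarrow> 0 \<le> Q x r"
    and Qup: "\<And>x r. x \<in> space M \<Longrightarrow> 0 < r \<Longrightarrow> Q x r \<le> Gf (distr M borel h) (h x) r"
    and \<gamma>: "0 \<le> \<gamma>" "ereal \<gamma> < packing_dim_measure (distr M borel h)"
  shows "AE x in M. Liminf (at_right 0) (\<lambda>r. ereal (r powr (-\<gamma>) * Q x r)) = 0"
proof -
  define \<nu> where "\<nu> = distr M borel h"
  interpret M: prob_space M by fact
  have "prob_space \<nu>" unfolding \<nu>_def by (rule M.prob_space_distr[OF h])
  then have fin: "finite_measure \<nu>" by (simp add: prob_space_def)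
  have sets_nu: "sets \<nu> = sets borel" unfolding \<nu>_def by simp
  obtain t where t: "ereal \<gamma> < ereal t" "ereal t < packing_dim_measure \<nu>"
    using ereal_dense2[OF \<gamma>(2)[folded \<nu>_def]] by auto
  have \<gamma>t: "\<gamma> < t" using t(1) by simp
  have Eb: "Eset \<nu> \<gamma> \<kappa> \<in> sets borel" for \<kappa> by (rule Eset_borel[OF fin sets_nu])
  have zero: "emeasure \<nu> (Eset \<nu> \<gamma> (real (Suc k))) = 0" for k
  proof (rule ccontr)
    assume "emeasure \<nu> (Eset \<nu> \<gamma> (real (Suc k))) \<noteq> 0"
    then have pos: "0 < emeasure \<nu> (Eset \<nu> \<gamma> (real (Suc k)))" by (simp add: zero_less_iff_neq_zero)
    have "packing_dim_measure \<nu> \<le> packing_dim (Eset \<nu> \<gamma> (real (Suc k)))"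
      unfolding packing_dim_measure_def using pos Eb sets_nu by (intro INF_lower) auto
    also have "\<dots> \<le> ereal t"
      unfolding packing_dim_def using \<gamma>(1) \<gamma>t packing_measure_zero[OF fin sets_nu \<gamma>(1) \<gamma>t, of "real (Suc k)"]
      by (intro Inf_lower) auto
    finally show False using t(2) by simp
  qed
  define N where "N = (\<Union>k. h -` Eset \<nu> \<gamma> (real (Suc k)) \<inter> space M)"
  have N: "N \<in> null_sets M"
    unfolding N_def
  proof (intro null_sets_UN)
    fix k
    have "emeasure M (h -` Eset \<nu> \<gamma> (real (Suc k)) \<inter> space M) = emeasure \<nu> (Eset \<nu> \<gamma> (real (Suc k)))"
      using emeasure_distr[OF h Eb] by (simp add: \<nu>_def[symmetric])
    then show "h -` Eset \<nu> \<gamma> (real (Suc k)) \<inter> space M \<in> null_sets M"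
      using zero[of k] measurable_sets[OF h Eb] by (simp add: null_sets_def)
  qed
  show ?thesis
  proof (rule AE_I'[OF N])
    show "{x \<in> space M. \<not> Liminf (at_right 0) (\<lambda>r. ereal (r powr (-\<gamma>) * Q x r)) = 0} \<subseteq> N"
    proof
      fix x assume x: "x \<in> {x \<in> space M. \<not> Liminf (at_right 0) (\<lambda>r. ereal (r powr (-\<gamma>) * Q x r)) = 0}"
      define X where "X = (\<lambda>r. ereal (r powr (-\<gamma>) * Q x r))"
      have xM: "x \<in> space M" and L: "Liminf (at_right 0) X \<noteq> 0" using x by (auto simp: X_def)
      have "0 \<le> Liminf (at_right 0) X"
      proof (rule Liminf_bounded)
        show "eventually (\<lambda>r. 0 \<le> X r) (at_right 0)"
          unfolding eventually_at_right_field X_def using Qnn[OF xM] by (intro exI[of _ 1]) auto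
      qed
      with L have Lpos: "0 < Liminf (at_right 0) X" by simp
      obtain c where c: "0 < ereal c" "ereal c < Liminf (at_right 0) X" using ereal_dense2[OF Lpos] by blast
      have "eventually (\<lambda>r. ereal c < X r) (at_right 0)"
        using c(2) le_Liminf_iff[of "Liminf (at_right 0) X" "at_right 0" X] by auto
      then obtain b where b: "0 < b" "\<And>r. 0 < r \<Longrightarrow> r < b \<Longrightarrow> ereal c < X r"
        unfolding eventually_at_right_field by auto
      have c0: "0 < c" using c(1) by simp
      obtain k :: nat where k: "inverse (real (Suc k)) < min b c"
        using reals_Archimedean[of "min b c"] b c0 by auto
      have "h x \<in> Eset \<nu> \<gamma> (real (Suc k))"
        unfolding Eset_def
      proof (intro CollectI ballI impI)
        fix q :: real assume "q \<in> \<rat>" and q: "0 < q \<and> q < 1 / real (Suc k)"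
        have qb: "q < b" using q k by (simp add: divide_inverse)
        have "c < q powr (-\<gamma>) * Q x q" using b(2)[of q] q qb by (simp add: X_def)
        then have "c < Q x q / q powr \<gamma>" by (simp add: powr_minus divide_inverse mult.commute)
        then have cq: "c * q powr \<gamma> < Q x q" using q by (simp add: pos_less_divide_eq)
        have "q powr \<gamma> / real (Suc k) = inverse (real (Suc k)) * q powr \<gamma>" by (simp add: divide_inverse mult.commute)
        also have "\<dots> \<le> c * q powr \<gamma>" using k by (intro mult_right_mono) auto
        also have "\<dots> \<le> Q x q" using cq by simp
        also have "\<dots> \<le> Gf \<nu> (h x) q" using Qup[OF xM] q \<nu>_def by auto
        finally show "q powr \<gamma> / real (Suc k) \<le> Gf \<nu> (h x) q" .
      qed
      then show "x \<in> N" unfolding N_def using xM by auto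
    qed
  qed
qed

lemma neg_case:
  fixes h :: "'m \<Rightarrow> 'a::euclidean_space"
  assumes M: "prob_space M" and h: "h \<in> M \<rightarrow>\<^sub>M borel"
    and Qnn: "\<And>x r. x \<in> space M \<Longrightarrow> 0 < r \<Longrightarrow> 0 \<le> Q x r"
    and Qup: "\<And>x r. x \<in> space M \<Longrightarrow> 0 < r \<Longrightarrow> Q x r \<le> Gf (distr M borel h) (h x) r"
    and \<gamma>: "\<gamma> < 0"
  shows "AE x in M. Liminf (at_right 0) (\<lambda>r. ereal (r powr (-\<gamma>) * Q x r)) = 0"
proof (rule AE_I2)
  fix x assume xM: "x \<in> space M"
  define \<nu> where "\<nu> = distr M borel h"
  interpret M: prob_space M by fact
  have P: "prob_space \<nu>" unfolding \<nu>_def by (rule M.prob_space_distr[OF h])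
  then have fin: "finite_measure \<nu>" by (simp add: prob_space_def)
  have sets_nu: "sets \<nu> = sets borel" unfolding \<nu>_def by simp
  have Q1: "Q x r \<le> 1" if r: "0 < r" for r
  proof -
    have "Q x r \<le> Gf \<nu> (h x) r" using Qup[OF xM r] by (simp add: \<nu>_def)
    also have "\<dots> \<le> measure \<nu> (space \<nu>)" by (rule Gf_le[OF fin sets_nu r])
    also have "\<dots> = 1" using P by (simp add: prob_space.prob_space)
    finally show ?thesis .
  qed
  have lim0: "((\<lambda>r::real. r powr (-\<gamma>)) \<longlongrightarrow> 0) (at_right 0)"
    by (rule tendsto_zero_powrI[of "\<lambda>r. r" _ "\<lambda>_. -\<gamma>" "-\<gamma>"])
       (use \<gamma> in \<open>auto intro!: tendsto_ident_at eventually_at_rightI[of 0 1]\<close>)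
  have "((\<lambda>r. r powr (-\<gamma>) * Q x r) \<longlongrightarrow> 0) (at_right 0)"
  proof (rule tendsto_sandwich[OF _ _ tendsto_const lim0])
    show "eventually (\<lambda>r. 0 \<le> r powr (-\<gamma>) * Q x r) (at_right 0)"
      using Qnn[OF xM] by (intro eventually_at_rightI[of 0 1]) auto
    show "eventually (\<lambda>r. r powr (-\<gamma>) * Q x r \<le> r powr (-\<gamma>)) (at_right 0)"
      using Q1 by (intro eventually_at_rightI[of 0 1]) (auto intro: mult_left_le)
  qed
  then have T: "((\<lambda>r. ereal (r powr (-\<gamma>) * Q x r)) \<longlongrightarrow> ereal 0) (at_right 0)"
    by (rule tendsto_ereal)
  have "Liminf (at_right 0) (\<lambda>r. ereal (r powr (-\<gamma>) * Q x r)) = ereal 0"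
    by (rule lim_imp_Liminf[OF trivial_limit_at_right_real T])
  then show "Liminf (at_right 0) (\<lambda>r. ereal (r powr (-\<gamma>) * Q x r)) = 0"
    by (simp add: zero_ereal_def)
qed

lemma main_generic:
  fixes h :: "'m \<Rightarrow> 'a::euclidean_space"
  assumes M: "prob_space M" and h: "h \<in> M \<rightarrow>\<^sub>M borel"
    and Qlow: "\<And>x r. x \<in> space M \<Longrightarrow> 0 < r \<Longrightarrow> measure (distr M borel h) (cball (h x) r) \<le> Q x r"
    and Qup: "\<And>x r. x \<in> space M \<Longrightarrow> 0 < r \<Longrightarrow> Q x r \<le> Gf (distr M borel h) (h x) r"
  shows "packing_dim_measure (distr M borel h) =
     Sup {ereal \<gamma> | \<gamma>. AE x in M. Liminf (at_right 0) (\<lambda>r. ereal (r powr (-\<gamma>) * Q x r)) = 0}"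
proof (rule antisym)
  have Qnn: "0 \<le> Q x r" if "x \<in> space M" "0 < r" for x r
    using Qlow[OF that] measure_nonneg order_trans by blast
  show "packing_dim_measure (distr M borel h) \<le>
     Sup {ereal \<gamma> | \<gamma>. AE x in M. Liminf (at_right 0) (\<lambda>r. ereal (r powr (-\<gamma>) * Q x r)) = 0}"
  proof (rule dense_le)
    fix y assume y: "y < packing_dim_measure (distr M borel h)"
    obtain \<gamma> where \<gamma>: "y < ereal \<gamma>" "ereal \<gamma> < packing_dim_measure (distr M borel h)"
      using ereal_dense2[OF y] by auto
    have "AE x in M. Liminf (at_right 0) (\<lambda>r. ereal (r powr (-\<gamma>) * Q x r)) = 0"
    proof (cases "0 \<le> \<gamma>")
      case True then show ?thesis using A_main[OF M h Qnn Qup True \<gamma>(2)] by blast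
    next
      case False then show ?thesis using neg_case[OF M h Qnn Qup] by simp
    qed
    then have "ereal \<gamma> \<le> Sup {ereal \<gamma> | \<gamma>. AE x in M. Liminf (at_right 0) (\<lambda>r. ereal (r powr (-\<gamma>) * Q x r)) = 0}"
      by (intro Sup_upper) auto
    then show "y \<le> Sup {ereal \<gamma> | \<gamma>. AE x in M. Liminf (at_right 0) (\<lambda>r. ereal (r powr (-\<gamma>) * Q x r)) = 0}"
      using \<gamma>(1) by simp
  qed
  show "Sup {ereal \<gamma> | \<gamma>. AE x in M. Liminf (at_right 0) (\<lambda>r. ereal (r powr (-\<gamma>) * Q x r)) = 0}
      \<le> packing_dim_measure (distr M borel h)"
  proof (rule Sup_least)
    fix y assume "y \<in> {ereal \<gamma> | \<gamma>. AE x in M. Liminf (at_right 0) (\<lambda>r. ereal (r powr (-\<gamma>) * Q x r)) = 0}"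
    then obtain \<gamma> where y: "y = ereal \<gamma>" and AE: "AE x in M. Liminf (at_right 0) (\<lambda>r. ereal (r powr (-\<gamma>) * Q x r)) = 0"
      by auto
    show "y \<le> packing_dim_measure (distr M borel h)"
      unfolding packing_dim_measure_def y
    proof (rule INF_greatest)
      fix E assume "E \<in> {E \<in> sets (distr M borel h). 0 < emeasure (distr M borel h) E}"
      then have E: "E \<in> sets borel" "0 < emeasure (distr M borel h) E" by auto
      show "ereal \<gamma> \<le> packing_dim E" by (rule B_main[OF M h Qlow AE E])
    qed
  qed
qed


lemma Dmax_closed: "closed (Dmax x r)"
proof -
  have "Dmax x r = (\<Inter>i. {y. \<bar>y $ i - x $ i\<bar> \<le> r})" by (auto simp: Dmax_def)
  also have "closed \<dots>" by (intro closed_INT ballI closed_Collect_le continuous_intros)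
  finally show ?thesis .
qed

lemma cball_borel[measurable]: "cball (c::'a::metric_space) \<rho> \<in> sets borel"
  by (rule borel_closed) simp

theorem corollary2p9:
  fixes f :: "real^'n \<Rightarrow> real^'d" and M :: "(real^'n) measure"
  assumes "f \<in> borel_measurable borel"
    and "prob_space M" and "sets M = sets borel"
  shows "(packing_dim_measure (distr M borel f) =
           Sup {ereal \<gamma> | \<gamma>. AE x in M.
              Liminf (at_right 0) (\<lambda>r. ereal (r powr (-\<gamma>) * (LINT y|M. I_d_f f x y r))) = 0}) \<and>
         (packing_dim_measure (distr M borel (graph_map f)) =
           Sup {ereal \<gamma> | \<gamma>. AE x in M.
              Liminf (at_right 0) (\<lambda>r. ereal (r powr (-\<gamma>) * (LINT y:Dmax x r|M. I_d_f f x y r))) = 0})"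
proof
  interpret M: prob_space M by fact
  have sM: "sets M = sets borel" by fact
  have fB[measurable]: "f \<in> borel_measurable borel" by fact
  have fM[measurable]: "f \<in> M \<rightarrow>\<^sub>M borel" using assms(1) measurable_cong_sets[OF sM refl] by blast
  have idM[measurable]: "(\<lambda>x. x) \<in> M \<rightarrow>\<^sub>M (borel :: (real^'n) measure)"
    unfolding measurable_cong_sets[OF sM refl] by measurable
  have bM: "g \<in> borel_measurable M" if "g \<in> borel_measurable borel" for g :: "real^'n \<Rightarrow> real"
    using that measurable_cong_sets[OF sM refl] by blast
  have Kfx: "(\<lambda>y. Kr r (f y - f x)) \<in> borel_measurable M" if r: "0 < r" for x r
    by (rule measurable_compose[OF _ Kr_shift_borel[OF r]]) (rule fM)
  have intK: "integrable M (\<lambda>y. Kr r (f y - f x))" if r: "0 < r" for x r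
    by (intro M.integrable_const_bound[where B=1] Kfx[OF r]) (auto simp: Kr_le1 Kr_nonneg r)
  show "packing_dim_measure (distr M borel f) =
           Sup {ereal \<gamma> | \<gamma>. AE x in M.
              Liminf (at_right 0) (\<lambda>r. ereal (r powr (-\<gamma>) * (LINT y|M. I_d_f f x y r))) = 0}"
  proof (rule main_generic[OF assms(2) fM])
    fix x and r :: real assume x: "x \<in> space M" and r: "0 < r"
    have eqI: "(LINT y|M. I_d_f f x y r) = (LINT y|M. Kr r (f y - f x))"
      using r by (simp add: I_d_f_Kr)
    have "measure (distr M borel f) (cball (f x) r) = (LINT z|distr M borel f. indicator (cball (f x) r) z)"
      by simp
    also have "\<dots> = (LINT y|M. indicator (cball (f x) r) (f y))"
      by (rule integral_distr[OF fM]) measurable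
    also have "\<dots> \<le> (LINT y|M. Kr r (f y - f x))"
    proof (rule integral_mono)
      show "integrable M (\<lambda>y. indicator (cball (f x) r) (f y) :: real)"
        by (intro M.integrable_const_bound[where B=1]) (auto simp: indicator_def)
      show "integrable M (\<lambda>y. Kr r (f y - f x))" by (rule intK[OF r])
      fix y
      show "indicator (cball (f x) r) (f y) \<le> Kr r (f y - f x)"
      proof (cases "f y \<in> cball (f x) r")
        case True
        then have "norm (f y - f x) \<le> r" by (simp add: dist_norm norm_minus_commute)
        then show ?thesis using True r by (simp add: Kr_one_norm)
      qed (simp add: Kr_nonneg r)
    qed
    finally show "measure (distr M borel f) (cball (f x) r) \<le> (LINT y|M. I_d_f f x y r)"
      using eqI by simp
    have "Gf (distr M borel f) (f x) r = (LINT y|M. Kr r (f y - f x))"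
      unfolding Gf_def by (rule integral_distr[OF fM Kr_shift_borel[OF r]])
    then show "(LINT y|M. I_d_f f x y r) \<le> Gf (distr M borel f) (f x) r"
      using eqI by simp
  qed
  have gM[measurable]: "graph_map f \<in> M \<rightarrow>\<^sub>M borel"
    unfolding graph_map_def[abs_def] by (intro borel_measurable_Pair idM fM)
  have DmaxB[measurable]: "Dmax x r \<in> sets borel" for x :: "real^'n" and r
    using Dmax_closed by (rule borel_closed)
  show "packing_dim_measure (distr M borel (graph_map f)) =
           Sup {ereal \<gamma> | \<gamma>. AE x in M.
              Liminf (at_right 0) (\<lambda>r. ereal (r powr (-\<gamma>) * (LINT y:Dmax x r|M. I_d_f f x y r))) = 0}"
  proof (rule main_generic[OF assms(2) gM])
    fix x and r :: real assume x: "x \<in> space M" and r: "0 < r"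
    have DM: "Dmax x r \<in> sets M" using sM DmaxB by simp
    have eqI: "(LINT y:Dmax x r|M. I_d_f f x y r) = (LINT y|M. indicator (Dmax x r) y * Kr r (f y - f x))"
      using r unfolding set_lebesgue_integral_def by (simp add: I_d_f_Kr)
    have intD: "integrable M (\<lambda>y. indicator (Dmax x r) y * Kr r (f y - f x))"
      using DM by (intro M.integrable_const_bound[where B=1] borel_measurable_times Kfx[OF r])
                  (auto simp: indicator_def Kr_le1 Kr_nonneg r abs_mult)
    have "measure (distr M borel (graph_map f)) (cball (graph_map f x) r) =
        (LINT z|distr M borel (graph_map f). indicator (cball (graph_map f x) r) z)"
      by simp
    also have "\<dots> = (LINT y|M. indicator (cball (graph_map f x) r) (graph_map f y))"
      by (rule integral_distr[OF gM]) measurable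
    also have "\<dots> \<le> (LINT y|M. indicator (Dmax x r) y * Kr r (f y - f x))"
    proof (rule integral_mono)
      show "integrable M (\<lambda>y. indicator (cball (graph_map f x) r) (graph_map f y) :: real)"
        by (intro M.integrable_const_bound[where B=1]) (auto simp: indicator_def)
      show "integrable M (\<lambda>y. indicator (Dmax x r) y * Kr r (f y - f x))" by (rule intD)
      fix y
      show "indicator (cball (graph_map f x) r) (graph_map f y) \<le> indicator (Dmax x r) y * Kr r (f y - f x)"
      proof (cases "graph_map f y \<in> cball (graph_map f x) r")
        case True
        then have d: "dist (x, f x) (y, f y) \<le> r" by (simp add: graph_map_def)
        have "dist x y \<le> r" using dist_fst_le[of "(x, f x)" "(y, f y)"] d by simp
        then have "y \<in> Dmax x r" unfolding Dmax_def
          using component_le_norm_cart[of "y - x"] by (auto simp: dist_norm norm_minus_commute intro: order_trans)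
        moreover have "dist (f x) (f y) \<le> r" using dist_snd_le[of "(x, f x)" "(y, f y)"] d by simp
        then have "Kr r (f y - f x) = 1" using r by (intro Kr_one_norm) (auto simp: dist_norm norm_minus_commute)
        ultimately show ?thesis using True by simp
      qed (simp add: Kr_nonneg r)
    qed
    finally show "measure (distr M borel (graph_map f)) (cball (graph_map f x) r) \<le> (LINT y:Dmax x r|M. I_d_f f x y r)"
      using eqI by simp
    have "Gf (distr M borel (graph_map f)) (graph_map f x) r = (LINT y|M. Kr r (graph_map f y - graph_map f x))"
      unfolding Gf_def by (rule integral_distr[OF gM Kr_shift_borel[OF r]])
    also have "\<dots> = (LINT y|M. Kr r (y - x) * Kr r (f y - f x))"
      by (simp add: graph_map_def Kr_Pair)
    finally have G: "Gf (distr M borel (graph_map f)) (graph_map f x) r = (LINT y|M. Kr r (y - x) * Kr r (f y - f x))" .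
    have "(LINT y|M. indicator (Dmax x r) y * Kr r (f y - f x)) \<le> (LINT y|M. Kr r (y - x) * Kr r (f y - f x))"
    proof (rule integral_mono)
      show "integrable M (\<lambda>y. indicator (Dmax x r) y * Kr r (f y - f x))" by (rule intD)
      have "(\<lambda>y. Kr r (y - x)) \<in> borel_measurable M" using Kr_shift_borel[OF r] by (rule bM)
      then show "integrable M (\<lambda>y. Kr r (y - x) * Kr r (f y - f x))"
        by (intro M.integrable_const_bound[where B=1] borel_measurable_times Kfx[OF r])
           (auto simp: Kr_le1 Kr_nonneg r abs_mult intro!: AE_I2 mult_le_one)
      fix y
      show "indicator (Dmax x r) y * Kr r (f y - f x) \<le> Kr r (y - x) * Kr r (f y - f x)"
      proof (cases "y \<in> Dmax x r")
        case True
        then have "Kr r (y - x) = 1" using r by (intro Kr_vec_one) (auto simp: Dmax_def)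
        then show ?thesis using True by simp
      qed (simp add: Kr_nonneg r)
    qed
    then show "(LINT y:Dmax x r|M. I_d_f f x y r) \<le> Gf (distr M borel (graph_map f)) (graph_map f x) r"
      using eqI G by simp
  qed
qed


end
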